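(* Fix integers $1\le N_c\le N_f$, Zipf exponent $\delta>0$ with $p_f=f^{-\delta}/\sum_{n=1}^{N_f}n^{-\delta}$, and parameters $\alpha>2$, integer $M_1\ge1$, $\lambda_{12},P_{12},B_{12}>0$. For $x>0$ define $\mathsf C_1(x)=\lambda_{12}(P_{12}B_{12})^{2/\alpha}{}_2F_1[-\tfrac2\alpha,M_1;1-\tfrac2\alpha;-\tfrac{x}{M_1B_{12}}]$, $\mathsf C_2(x)=\Gamma(1-\tfrac2\alpha)\Gamma(1+\tfrac2\alpha)x^{2/\alpha}$, $\mathsf C_3(x)={}_2F_1[-\tfrac2\alpha,1;1-\tfrac2\alpha;-x]-\mathsf C_2(x)-1$, and let $\underline{\mathbf q}^*(x)$ be the maximizer over $\{\mathbf q\in[0,1]^{N_f}:\sum_fq_f\le N_c\}$ of the high-user-density lower bound $$\underline p_{{\rm s},2}(\mathbf q;x)=\sum_{f=1}^{N_f}\frac{p_fq_f}{\mathsf C_1(x)+\mathsf C_2(x)+(\mathsf C_3(x)+1)q_f},$$ given by $\underline q^*_f(x)=\Big[\frac{\sqrt{\mathsf C_1(x)+\mathsf C_2(x)}}{\sqrt\nu(\mathsf C_3(x)+1)}\sqrt{p_f}-\frac{\mathsf C_1(x)+\mathsf C_2(x)}{\mathsf C_3(x)+1}\Big]_0^1$ with $\nu>0$ such that $\sum_f\underline q^*_f(x)=N_c$. Let $x=\bar\gamma=2^{\frac{R_0}{W}(1+1.28\frac{\lambda_u}{\lambda_2}\mathcal P^o)}-1$ with $W>0$ and $\mathcal P^o>0$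 fixed. Then as $R_0\to\infty$ (all other parameters fixed), and also as $\lambda_u/\lambda_2\to\infty$ (all other parameters, including $R_0>0$, fixed), $$\underline q^*_f(\bar\gamma)\to1\ \text{ for }f=1,\dots,N_c,\qquad \underline q^*_f(\bar\gamma)\to0\ \text{ for }f=N_c+1,\dots,N_f.$$
   Context: $[x]_0^1=\max\{\min\{x,1\},0\}$; ${}_2F_1$ is the Gauss hypergeometric function, $\Gamma$ the Gamma function. $R_0$ is the per-user rate requirement, $W$ the bandwidth, $\lambda_u/\lambda_2$ the user-to-helper density ratio, $\mathcal P^o$ the maximal helper-tier association probability; $\lambda_{12}=\lambda_1/\lambda_2$, $P_{12}=P_1/P_2$, $B_{12}=B_1/B_2$. In the high-user-density regime all helpers are active. The conclusion means that caching the $N_c$ most popular files at every helper becomes optimal. *)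

theory Defs
  imports "HOL-Analysis.Analysis"
begin

definition hyp2f1_series :: "real \<Rightarrow> real \<Rightarrow> real \<Rightarrow> real \<Rightarrow> real" where
  "hyp2f1_series a b c z =
     (\<Sum>n. pochhammer a n * pochhammer b n / pochhammer c n * z ^ n / fact n)"

text \<open>Gauss hypergeometric function 2F1[a,b;c;z] on the real axis: the power series for
  abs z < 1, and for z \<le> -1 its analytic continuation given by the Pfaff transformation
  2F1[a,b;c;z] = (1-z)^(-a) 2F1[a,c-b;c;z/(z-1)] (the argument z/(z-1) lies in [1/2,1)).
  Only arguments z < 0 are used below.\<close>
definition hyp2f1 :: "real \<Rightarrow> real \<Rightarrow> real \<Rightarrow> real \<Rightarrow> real" where
  "hyp2f1 a b c z =
     (if \<bar>z\<bar> < 1 then hyp2f1_series a b c z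
      else (1 - z) powr (- a) * hyp2f1_series a (c - b) c (z / (z - 1)))"

definition clip01 :: "real \<Rightarrow> real" where
  "clip01 x = max (min x 1) 0"

definition zipf :: "nat \<Rightarrow> real \<Rightarrow> nat \<Rightarrow> real" where
  "zipf Nf \<delta> f = real f powr (- \<delta>) / (\<Sum>n = 1..Nf. real n powr (- \<delta>))"

definition C1 :: "real \<Rightarrow> nat \<Rightarrow> real \<Rightarrow> real \<Rightarrow> real \<Rightarrow> real \<Rightarrow> real" where
  "C1 \<alpha> M1 lam12 P12 B12 x =
     lam12 * (P12 * B12) powr (2 / \<alpha>) *
     hyp2f1 (- 2 / \<alpha>) (real M1) (1 - 2 / \<alpha>) (- x / (real M1 * B12))"

definition C2 :: "real \<Rightarrow> real \<Rightarrow> real" where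
  "C2 \<alpha> x = Gamma (1 - 2 / \<alpha>) * Gamma (1 + 2 / \<alpha>) * x powr (2 / \<alpha>)"

definition C3 :: "real \<Rightarrow> real \<Rightarrow> real" where
  "C3 \<alpha> x = hyp2f1 (- 2 / \<alpha>) 1 (1 - 2 / \<alpha>) (- x) - C2 \<alpha> x - 1"

definition qlow :: "nat \<Rightarrow> real \<Rightarrow> real \<Rightarrow> nat \<Rightarrow> real \<Rightarrow> real \<Rightarrow> real \<Rightarrow> real \<Rightarrow> real \<Rightarrow> nat \<Rightarrow> real" where
  "qlow Nf \<delta> \<alpha> M1 lam12 P12 B12 x \<nu> f =
     (let A = C1 \<alpha> M1 lam12 P12 B12 x + C2 \<alpha> x; D = C3 \<alpha> x + 1 in
      clip01 (sqrt A / (sqrt \<nu> * D) * sqrt (zipf Nf \<delta> f) - A / D))"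

text \<open>SINR threshold gamma-bar; rho = lambda_u / lambda_2.\<close>
definition gbar :: "real \<Rightarrow> real \<Rightarrow> real \<Rightarrow> real \<Rightarrow> real" where
  "gbar W Po R0 \<rho> = 2 powr (R0 / W * (1 + 1.28 * \<rho> * Po)) - 1"

end

theory Submission
  imports Defs
begin


definition cfs :: "real \<Rightarrow> real \<Rightarrow> nat \<Rightarrow> real" where
  "cfs d e n = (- d / (real n - d)) * ((e gchoose n) * (-1)^n)"

lemma cfs_eq:
  assumes "0 < d" "d < 1"
  shows "pochhammer (-d) n * pochhammer (-e) n / pochhammer (1-d) n * w^n / fact n = cfs d e n * w^n"
proof -
  have p0: "pochhammer (1-d) n \<noteq> 0"
    using assms by (auto simp: pochhammer_eq_0_iff)
  have nd: "real n - d \<noteq> 0" using assms by (cases n) auto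
  have "pochhammer (-d) (Suc n) = (-d + real n) * pochhammer (-d) n"
    by (rule pochhammer_rec')
  moreover have "pochhammer (-d) (Suc n) = (-d) * pochhammer (-d + 1) n"
    by (rule pochhammer_rec)
  ultimately have r: "pochhammer (-d) n * (real n - d) = (-d) * pochhammer (1-d) n"
    by (simp add: algebra_simps)
  have g: "pochhammer (-e) n / fact n = (e gchoose n) * (-1)^n"
    by (simp add: gbinomial_pochhammer)
  have "pochhammer (-d) n / pochhammer (1-d) n = - d / (real n - d)"
    using r p0 nd by (simp add: field_simps)
  then show ?thesis unfolding cfs_def
    by (metis (no_types, lifting) g times_divide_eq_left times_divide_eq_right mult.commute mult.assoc)
qed

lemma hyp_series_eq:
  assumes "0 < d" "d < 1"
  shows "hyp2f1_series (-d) (-e) (1-d) w = (\<Sum>n. cfs d e n * w^n)"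
  unfolding hyp2f1_series_def using cfs_eq[OF assms] by simp

lemma beta_sums:
  fixes w :: real assumes "\<bar>w\<bar> < 1"
  shows "(\<lambda>n. (e gchoose n) * (-1)^n * w^n) sums ((1 - w) powr e)"
proof -
  have a: "\<bar>-w\<bar> < 1" using assms by simp
  have "(\<lambda>n. (e gchoose n) * (-w)^n) sums ((1 + - w) powr e)"
    by (rule gen_binomial_real[OF a])
  moreover have "(\<lambda>n. (e gchoose n) * (-w)^n) = (\<lambda>n. (e gchoose n) * (-1)^n * w^n)"
    by (rule ext, subst power_minus, rule mult.assoc[symmetric])
  moreover have "1 + - w = 1 - w" by simp
  ultimately show ?thesis by simp
qed

lemma cfs_bound:
  assumes "0 < d" "d < 1"
  shows "\<bar>- d / (real n - d)\<bar> \<le> 1 + d / (1 - d)"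
proof (cases n)
  case 0 then show ?thesis using assms by simp
next
  case (Suc m)
  have "real n - d \<ge> 1 - d" using Suc by simp
  then have "d / (real n - d) \<le> d / (1 - d)" using assms
    by (intro divide_left_mono) auto
  moreover have "real n - d > 0" using Suc assms by simp
  ultimately show ?thesis using assms by (simp add: abs_divide) 
qed

lemma cfs_summable:
  fixes w :: real
  assumes "0 < d" "d < 1" "\<bar>w\<bar> < 1"
  shows "summable (\<lambda>n. cfs d e n * w^n)"
proof -
  define K where "K = (\<bar>w\<bar> + 1) / 2"
  have K: "\<bar>w\<bar> < K" "K < 1" using assms by (auto simp: K_def)
  have "summable (\<lambda>n. (e gchoose n) * (-1)^n * K^n)"
    using beta_sums[of K e] K by (auto simp: sums_iff)
  then have s1: "summable (\<lambda>n. norm ((e gchoose n) * (-1)^n * w ^ n))"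
    using powser_insidea[of "\<lambda>n. (e gchoose n) * (-1)^n" K w] K by simp
  show ?thesis
  proof (rule summable_comparison_test)
    show "\<exists>N. \<forall>n\<ge>N. norm (cfs d e n * w^n) \<le> (1 + d / (1 - d)) * norm ((e gchoose n) * (-1)^n * w ^ n)"
    proof (intro exI allI impI)
      fix n :: nat
      have "norm (cfs d e n * w^n) = \<bar>- d / (real n - d)\<bar> * norm ((e gchoose n) * (-1)^n * w ^ n)"
        unfolding cfs_def by (simp add: abs_mult)
      also have "\<dots> \<le> (1 + d / (1 - d)) * norm ((e gchoose n) * (-1)^n * w ^ n)"
        by (intro mult_right_mono cfs_bound assms) auto
      finally show "norm (cfs d e n * w^n) \<le> (1 + d / (1 - d)) * norm ((e gchoose n) * (-1)^n * w ^ n)" .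
    qed
    show "summable (\<lambda>n. (1 + d / (1 - d)) * norm ((e gchoose n) * (-1)^n * w ^ n))"
      using s1 by (rule summable_mult)
  qed
qed

definition HH :: "real \<Rightarrow> real \<Rightarrow> real \<Rightarrow> real" where
  "HH d e w = (\<Sum>n. cfs d e n * w^n)"

definition HD :: "real \<Rightarrow> real \<Rightarrow> real \<Rightarrow> real" where
  "HD d e w = (\<Sum>n. diffs (cfs d e) n * w^n)"

lemma HH_deriv:
  fixes w :: real
  assumes "0 < d" "d < 1" "\<bar>w\<bar> < 1"
  shows "(HH d e has_field_derivative HD d e w) (at w)"
  unfolding HH_def HD_def
  by (rule termdiffs_strong'[where K=1]) (use assms cfs_summable in auto)

lemma HH_0: "d > 0 \<Longrightarrow> HH d e 0 = 1"
  unfolding HH_def by (subst powser_zero) (simp add: cfs_def)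

lemma HH_ode:
  fixes w :: real
  assumes "0 < d" "d < 1" "\<bar>w\<bar> < 1"
  shows "w * HD d e w - d * HH d e w = - d * (1 - w) powr e"
proof -
  define c where "c = cfs d e"
  have sd: "summable (\<lambda>n. diffs c n * w^n)"
    unfolding c_def by (rule termdiff_converges[where K=1]) (use assms cfs_summable in auto)
  define g where "g n = real n * c n * w^n" for n
  have "(\<lambda>n. diffs c n * w^n * w) sums (HD d e w * w)"
    unfolding HD_def c_def[symmetric] using sd by (intro sums_mult2 summable_sums)
  moreover have "(\<lambda>n. diffs c n * w^n * w) = (\<lambda>n. g (Suc n))"
    by (auto simp: g_def diffs_def fun_eq_iff)
  ultimately have "(\<lambda>n. g (Suc n)) sums (HD d e w * w)" by simp
  then have gs: "g sums (HD d e w * w)" by (subst (asm) sums_Suc_iff) (simp add: g_def)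
  have hs: "(\<lambda>n. c n * w^n) sums HH d e w"
    unfolding HH_def c_def using cfs_summable[OF assms] by (intro summable_sums)
  have "(\<lambda>n. g n - d * (c n * w^n)) sums (HD d e w * w - d * HH d e w)"
    by (intro sums_diff gs sums_mult hs)
  moreover have "(\<lambda>n. g n - d * (c n * w^n)) = (\<lambda>n. (-d) * ((e gchoose n) * (-1)^n * w^n))"
  proof
    fix n
    have "real n - d \<noteq> 0" using assms by (cases n) auto
    then have "(real n - d) * c n = (-d) * ((e gchoose n) * (-1)^n)"
      unfolding c_def cfs_def by simp
    moreover have "g n - d * (c n * w^n) = (real n - d) * c n * w^n"
      unfolding g_def by (simp add: algebra_simps)
    ultimately show "g n - d * (c n * w^n) = (-d) * ((e gchoose n) * (-1)^n * w^n)"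
      by simp
  qed
  ultimately have "(\<lambda>n. (-d) * ((e gchoose n) * (-1)^n * w^n)) sums (HD d e w * w - d * HH d e w)"
    by simp
  moreover have "(\<lambda>n. (-d) * ((e gchoose n) * (-1)^n * w^n)) sums ((-d) * (1 - w) powr e)"
    by (intro sums_mult beta_sums assms)
  ultimately show ?thesis by (metis sums_unique2 mult.commute)
qed

lemma lim0:
  fixes g :: "real \<Rightarrow> real"
  assumes "d < 1" "g 0 = 0" "(g has_field_derivative g0) (at 0)"
  shows "((\<lambda>w. g w * w powr (-d)) \<longlongrightarrow> 0) (at_right 0)"
proof -
  have "((\<lambda>w. (g w - g 0)/(w - 0)) \<longlongrightarrow> g0) (at 0)"
    using assms(3) by (simp add: has_field_derivative_iff)
  then have "((\<lambda>w. g w / w) \<longlongrightarrow> g0) (at 0)" using assms(2) by simp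
  then have 1: "((\<lambda>w. g w / w) \<longlongrightarrow> g0) (at_right 0)"
    by (rule tendsto_within_subset) auto
  have 2: "((\<lambda>w. w powr (1-d)) \<longlongrightarrow> 0) (at_right 0)"
  proof (rule tendsto_zero_powrI)
    show "((\<lambda>w::real. w) \<longlongrightarrow> 0) (at_right 0)" by (rule tendsto_ident_at)
    show "((\<lambda>w::real. 1 - d) \<longlongrightarrow> 1 - d) (at_right 0)" by simp
    show "\<forall>\<^sub>F x in at_right 0. 0 \<le> (x::real)"
      by (rule eventually_at_rightI[where b=1]) auto
  qed (use assms in simp)
  have "((\<lambda>w. g w / w * w powr (1-d)) \<longlongrightarrow> g0 * 0) (at_right 0)"
    by (rule tendsto_mult[OF 1 2])
  then have 3: "((\<lambda>w. g w / w * w powr (1-d)) \<longlongrightarrow> 0) (at_right 0)" by simp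
  show ?thesis
  proof (rule Lim_transform_eventually[OF 3])
    show "\<forall>\<^sub>F x in at_right 0. g x / x * x powr (1 - d) = g x * x powr - d"
    proof (rule eventually_at_rightI[where b=1])
      fix x :: real assume "x \<in> {0<..<1}"
      then have x: "x > 0" by simp
      have "x powr (1 - d) = x * x powr (-d)" using x by (simp add: powr_diff powr_minus_divide)
      then show "g x / x * x powr (1 - d) = g x * x powr - d" using x by simp
    qed simp
  qed
qed

lemma psi_deriv:
  fixes t :: real
  assumes "0 < d" "d < 1" "0 < t" "t < 1"
  shows "((\<lambda>t. (HH d e t - 1) * t powr (-d)) has_field_derivative
           t powr (-d-1) * (d * (1 - (1 - t) powr e))) (at t)"
proof -
  have a: "\<bar>t\<bar> < 1" using assms by simp
  have "((\<lambda>t. (HH d e t - 1) * t powr (-d)) has_field_derivative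
           (HD d e t - 0) * t powr (-d) + (-d * t powr (-d-1)) * (HH d e t - 1)) (at t)"
    by (intro DERIV_mult DERIV_diff HH_deriv[OF assms(1,2) a] DERIV_const
        has_real_derivative_powr[OF assms(3), of "-d"])
  then have "((\<lambda>t. (HH d e t - 1) * t powr (-d)) has_field_derivative
           HD d e t * t powr (-d) + (HH d e t - 1) * (-d * t powr (-d-1))) (at t)"
    by (simp add: algebra_simps)
  moreover have "HD d e t * t powr (-d) + (HH d e t - 1) * (-d * t powr (-d-1))
      = t powr (-d-1) * (d * (1 - (1 - t) powr e))"
  proof -
    have tp: "t powr (-d) = t * t powr (-d-1)"
      using assms by (simp add: powr_diff)
    have "HD d e t * t powr (-d) + (HH d e t - 1) * (-d * t powr (-d-1))
        = t powr (-d-1) * (t * HD d e t - d * HH d e t + d)"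
      unfolding tp by (simp add: algebra_simps)
    also have "\<dots> = t powr (-d-1) * (d * (1 - (1 - t) powr e))"
    proof -
      have o: "t * HD d e t - d * HH d e t = - d * (1 - t) powr e"
        by (rule HH_ode[OF assms(1,2) a])
      have "t * HD d e t - d * HH d e t + d = d * (1 - (1 - t) powr e)"
        using o by (simp add: algebra_simps)
      then show ?thesis by simp
    qed
    finally show ?thesis .
  qed
  ultimately show ?thesis by simp
qed

lemma HH_ge1:
  assumes "0 < d" "d < 1" "0 \<le> e" "0 < w" "w < 1"
  shows "1 \<le> HH d e w"
proof -
  define psi where "psi t = (HH d e t - 1) * t powr (-d)" for t
  have mono: "psi v \<le> psi w" if v: "0 < v" "v < w" for v
  proof (rule DERIV_nonneg_imp_increasing_open[of v w psi])
    show "v \<le> w" using v by simp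
  next
    fix x assume x: "v < x" "x < w"
    have "0 \<le> x powr (-d-1) * (d * (1 - (1 - x) powr e))"
      using assms x v by (intro mult_nonneg_nonneg) (auto intro!: powr_le1)
    then show "\<exists>y. (psi has_real_derivative y) (at x) \<and> 0 \<le> y"
      unfolding psi_def using psi_deriv[OF assms(1,2), of x e] x v assms by auto
  next
    show "continuous_on {v..w} psi"
      unfolding psi_def
      by (rule DERIV_continuous_on, rule has_field_derivative_at_within, rule psi_deriv)
         (use assms v in auto)
  qed
  have lim: "(psi \<longlongrightarrow> 0) (at_right 0)"
    unfolding psi_def
  proof (rule lim0)
    show "HH d e 0 - 1 = 0" using HH_0 assms by simp
    show "((\<lambda>t. HH d e t - 1) has_field_derivative HD d e 0 - 0) (at 0)"
      by (intro DERIV_diff HH_deriv DERIV_const) (use assms in auto)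
  qed (use assms in auto)
  have "0 \<le> psi w"
  proof (rule tendsto_upperbound[OF lim])
    show "\<forall>\<^sub>F i in at_right 0. psi i \<le> psi w"
      by (rule eventually_at_rightI[where b=w]) (use mono assms in auto)
  qed simp
  then show ?thesis unfolding psi_def using assms
    by (simp add: zero_le_mult_iff)
qed

definition chi :: "real \<Rightarrow> real \<Rightarrow> real" where
  "chi d t = (HH d d t - (1 - t) powr d) * t powr (-d)"

definition bf :: "real \<Rightarrow> real \<Rightarrow> real" where
  "bf d t = t powr (-d) * (1 - t) powr (d - 1)"

lemma omt_deriv:
  fixes t :: real assumes "t < 1"
  shows "((\<lambda>t. (1 - t) powr d) has_field_derivative (d * (1 - t) powr (d - 1) * (0 - 1))) (at t)"
proof -
  have h: "((\<lambda>t. 1 - t) has_real_derivative (0 - 1)) (at t)"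
    by (intro DERIV_diff DERIV_const DERIV_ident)
  have p: "1 - t > 0" using assms by simp
  show ?thesis by (rule DERIV_chain2[OF has_real_derivative_powr[OF p] h])
qed

lemma chi_deriv:
  fixes t :: real
  assumes "0 < d" "d < 1" "0 < t" "t < 1"
  shows "(chi d has_field_derivative d * bf d t) (at t)"
proof -
  have a: "\<bar>t\<bar> < 1" using assms by simp
  have "(chi d has_field_derivative
     (HD d d t - d * (1 - t) powr (d - 1) * (0 - 1)) * t powr (-d)
       + (-d * t powr (-d-1)) * (HH d d t - (1 - t) powr d)) (at t)"
    unfolding chi_def
    by (intro DERIV_mult DERIV_diff HH_deriv[OF assms(1,2) a] omt_deriv
        has_real_derivative_powr[OF assms(3), of "-d"]) (use assms in auto)
  moreover have "(HD d d t - d * (1 - t) powr (d - 1) * (0 - 1)) * t powr (-d)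
       + (-d * t powr (-d-1)) * (HH d d t - (1 - t) powr d) = d * bf d t"
  proof -
    define P where "P = t powr (-d-1)"
    define Q where "Q = (1 - t) powr (d - 1)"
    have tp: "t powr (-d) = t * P" unfolding P_def using assms by (simp add: powr_diff)
    have tq: "(1 - t) powr d = (1 - t) * Q" unfolding Q_def using assms by (simp add: powr_diff)
    have o: "t * HD d d t = d * HH d d t - d * ((1 - t) * Q)"
      using HH_ode[OF assms(1,2) a, of d] tq by (simp add: algebra_simps)
    have "(HD d d t - d * Q * (0 - 1)) * (t * P) + (-d * P) * (HH d d t - (1 - t) * Q)
        = P * (t * HD d d t) + d * Q * t * P - d * P * HH d d t + d * P * (1 - t) * Q"
      by (simp add: algebra_simps)
    also have "\<dots> = d * ((t * P) * Q)" unfolding o by (simp add: algebra_simps)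
    finally show ?thesis unfolding bf_def tp tq Q_def[symmetric] P_def[symmetric] by simp
  qed
  ultimately show ?thesis by simp
qed

lemma chi_0: "chi d 0 = 0" by (simp add: chi_def)

lemma chi_lim0:
  assumes "0 < d" "d < 1"
  shows "(chi d \<longlongrightarrow> 0) (at_right 0)"
  unfolding chi_def
proof (rule lim0)
  show "HH d d 0 - (1 - 0) powr d = 0" using HH_0 assms by simp
  show "((\<lambda>t. HH d d t - (1 - t) powr d) has_field_derivative HD d d 0 - (d * (1 - 0) powr (d - 1) * (0 - 1))) (at 0)"
    by (intro DERIV_diff HH_deriv omt_deriv) (use assms in auto)
qed (use assms in auto)

lemma chi_cont:
  assumes "0 < d" "d < 1" "0 < v" "v < 1"
  shows "continuous_on {0..v} (chi d)"
proof (rule continuous_on_IccI)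
  show "(chi d \<longlongrightarrow> chi d 0) (at_right 0)" using chi_lim0[OF assms(1,2)] chi_0 by simp
  have "isCont (chi d) v" by (rule DERIV_isCont, rule chi_deriv) (use assms in auto)
  then show "(chi d \<longlongrightarrow> chi d v) (at_left v)"
    by (simp add: isCont_def filterlim_at_split)
  fix x :: real assume x: "0 < x" "x < v"
  have "isCont (chi d) x" by (rule DERIV_isCont, rule chi_deriv) (use assms x in auto)
  then show "chi d \<midarrow>x\<rightarrow> chi d x" by (simp add: isCont_def)
qed (use assms in auto)

lemma chi_int:
  assumes "0 < d" "d < 1" "0 < v" "v < 1"
  shows "((\<lambda>t. d * bf d t) has_integral chi d v) {0..v}"
proof -
  have "((\<lambda>t. d * bf d t) has_integral (chi d v - chi d 0)) {0..v}"
  proof (rule fundamental_theorem_of_calculus_interior)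
    show "continuous_on {0..v} (chi d)" by (rule chi_cont[OF assms])
    fix x assume "x \<in> {0<..<v}"
    then show "(chi d has_vector_derivative d * bf d x) (at x)"
      unfolding has_real_derivative_iff_has_vector_derivative[symmetric]
      using assms by (intro chi_deriv) auto
  qed (use assms in auto)
  then show ?thesis by (simp add: chi_0)
qed

lemma bf_int:
  assumes "0 < d" "d < 1"
  shows "(bf d has_integral Beta (1 - d) d) {0..1}"
proof -
  have "bf d = (\<lambda>t. t powr (-d) * (1-t) powr (d-1))" by (rule ext) (simp add: bf_def)
  then show ?thesis using has_integral_Beta_real[of "1 - d" d] assms by simp
qed

lemma GG_eq:
  fixes d :: real
  assumes "0 < d" "d < 1"
  shows "d * Beta (1 - d) d = Gamma (1 - d) * Gamma (1 + d)"
proof -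
  have "d \<notin> \<int>\<^sub>\<le>\<^sub>0"
  proof
    assume "d \<in> \<int>\<^sub>\<le>\<^sub>0"
    then obtain n where n: "d = real_of_int n" "n \<le> 0" by (auto elim!: nonpos_Ints_cases)
    then have "d \<le> 0" by simp
    then show False using assms by simp
  qed
  then have "Gamma (d + 1) = d * Gamma d" by (rule Gamma_plus1)
  then show ?thesis by (simp add: Beta_def add.commute)
qed

lemma chi_lim1:
  assumes "0 < d" "d < 1"
  shows "(chi d \<longlongrightarrow> Gamma (1 - d) * Gamma (1 + d)) (at_left 1)"
proof -
  have int1: "bf d integrable_on {0..1}" using bf_int[OF assms] by blast
  have "continuous_on {0..1} (\<lambda>x. integral {0..x} (bf d))"
    by (rule indefinite_integral_continuous_1[OF int1])
  then have "((\<lambda>x. integral {0..x} (bf d)) \<longlongrightarrow> integral {0..1} (bf d)) (at_left 1)"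
    by (rule continuous_on_Icc_at_leftD) simp
  then have "((\<lambda>x. d * integral {0..x} (bf d)) \<longlongrightarrow> d * Beta (1 - d) d) (at_left 1)"
    using bf_int[OF assms] by (intro tendsto_mult tendsto_const) (auto dest: integral_unique)
  then have L: "((\<lambda>x. d * integral {0..x} (bf d)) \<longlongrightarrow> Gamma (1 - d) * Gamma (1 + d)) (at_left 1)"
    using GG_eq[OF assms] by simp
  show ?thesis
  proof (rule Lim_transform_eventually[OF L])
    show "\<forall>\<^sub>F x in at_left 1. d * integral {0..x} (bf d) = chi d x"
    proof (rule eventually_at_leftI[where a=0])
      fix x :: real assume x: "x \<in> {0<..<1}"
      have "((\<lambda>t. d * bf d t) has_integral chi d x) {0..x}" using x assms by (intro chi_int) auto
      then have "integral {0..x} (\<lambda>t. d * bf d t) = chi d x" by (rule integral_unique)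
      then show "d * integral {0..x} (bf d) = chi d x" by simp
    qed simp
  qed
qed

lemma bf_pos: "0 < t \<Longrightarrow> t < 1 \<Longrightarrow> 0 < bf d t"
  by (simp add: bf_def)

lemma chi_mono:
  assumes "0 < d" "d < 1" "0 < a" "a < b" "b < 1"
  shows "chi d a < chi d b"
proof (rule DERIV_pos_imp_increasing_open[OF assms(4)])
  fix x assume x: "a < x" "x < b"
  show "\<exists>y. (chi d has_real_derivative y) (at x) \<and> 0 < y"
    using chi_deriv[of d x] bf_pos[of x d] assms x by auto
next
  show "continuous_on {a..b} (chi d)"
    by (rule DERIV_continuous_on, rule has_field_derivative_at_within, rule chi_deriv)
       (use assms in auto)
qed

lemma chi_lt:
  assumes "0 < d" "d < 1" "0 < w" "w < 1"
  shows "chi d w < Gamma (1 - d) * Gamma (1 + d)"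
proof -
  define v where "v = (w + 1) / 2"
  have v: "w < v" "v < 1" using assms by (auto simp: v_def)
  have "chi d v \<le> Gamma (1 - d) * Gamma (1 + d)"
  proof (rule tendsto_lowerbound[OF chi_lim1[OF assms(1,2)]])
    show "\<forall>\<^sub>F i in at_left 1. chi d v \<le> chi d i"
      by (rule eventually_at_leftI[where a=v]) (use assms v chi_mono[of d v] in \<open>auto intro: less_imp_le\<close>)
  qed simp
  moreover have "chi d w < chi d v" using chi_mono[of d w v] assms v by auto
  ultimately show ?thesis by simp
qed

lemma phi_gt:
  assumes "0 < d" "d < 1" "0 < w" "w < 1"
  shows "Gamma (1 - d) * Gamma (1 + d) < HH d d w * w powr (-d)"
proof -
  define eta where "eta t = chi d t + w powr (-d) * (1 - t) powr d" for t
  have dec: "eta b < eta a" if ab: "w \<le> a" "a < b" "b < 1" for a b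
  proof (rule DERIV_neg_imp_decreasing_open[OF ab(2)])
    fix x assume x: "a < x" "x < b"
    have der: "(eta has_real_derivative d * bf d x + w powr (-d) * (d * (1 - x) powr (d - 1) * (0 - 1))) (at x)"
      unfolding eta_def
      by (intro DERIV_add DERIV_cmult chi_deriv omt_deriv) (use assms ab x in auto)
    have "x powr (-d) < w powr (-d)"
      using assms ab x by (intro powr_less_mono2_neg) auto
    then have "d * bf d x + w powr (-d) * (d * (1 - x) powr (d - 1) * (0 - 1))
        = d * (1 - x) powr (d - 1) * (x powr (-d) - w powr (-d))"
      by (simp add: bf_def algebra_simps)
    moreover have "d * (1 - x) powr (d - 1) * (x powr (-d) - w powr (-d)) < 0"
      using \<open>x powr (-d) < w powr (-d)\<close> assms ab x
      by (intro mult_pos_neg) auto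
    ultimately show "\<exists>y. (eta has_real_derivative y) (at x) \<and> y < 0" using der by auto
  next
    show "continuous_on {a..b} eta"
    proof (rule DERIV_continuous_on, rule has_field_derivative_at_within)
      fix x assume x: "x \<in> {a..b}"
      show "(eta has_real_derivative d * bf d x + w powr (-d) * (d * (1 - x) powr (d - 1) * (0 - 1))) (at x)"
        unfolding eta_def
        by (intro DERIV_add DERIV_cmult chi_deriv omt_deriv) (use assms ab x in auto)
    qed
  qed
  have lim: "(eta \<longlongrightarrow> Gamma (1 - d) * Gamma (1 + d) + w powr (-d) * 0) (at_left 1)"
    unfolding eta_def
  proof (intro tendsto_add tendsto_mult tendsto_const chi_lim1 assms)
    show "((\<lambda>t. (1 - t) powr d) \<longlongrightarrow> 0) (at_left 1)"
    proof (rule tendsto_zero_powrI)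
      have "((\<lambda>t::real. 1 - t) \<longlongrightarrow> 1 - 1) (at_left 1)"
        by (intro tendsto_diff tendsto_const tendsto_ident_at)
      then show "((\<lambda>t::real. 1 - t) \<longlongrightarrow> 0) (at_left 1)" by simp
      show "\<forall>\<^sub>F x in at_left 1. 0 \<le> 1 - (x::real)"
        by (rule eventually_at_leftI[where a=0]) auto
    qed (use assms in auto)
  qed
  define v where "v = (w + 1) / 2"
  have v: "w < v" "v < 1" using assms by (auto simp: v_def)
  have "Gamma (1 - d) * Gamma (1 + d) \<le> eta v"
  proof (rule tendsto_upperbound[OF lim[simplified]])
    show "\<forall>\<^sub>F i in at_left 1. eta i \<le> eta v"
      by (rule eventually_at_leftI[where a=v]) (use v dec[of v] in \<open>auto intro: less_imp_le\<close>)
  qed simp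
  also have "eta v < eta w" using dec[of w v] v by simp
  also have "eta w = HH d d w * w powr (-d)"
    unfolding eta_def chi_def by (simp add: algebra_simps)
  finally show ?thesis .
qed

lemma comb:
  fixes q r :: "nat \<Rightarrow> real" and s K :: real and Nf Nc :: nat
  assumes s: "s > 0"
    and r: "\<And>f g. 1 \<le> f \<Longrightarrow> f < g \<Longrightarrow> g \<le> Nf \<Longrightarrow> r g \<le> r f"
    and rpos: "\<And>f. 1 \<le> f \<Longrightarrow> f \<le> Nf \<Longrightarrow> r f > 0"
    and sep: "\<And>f g. 1 \<le> f \<Longrightarrow> f < g \<Longrightarrow> g \<le> Nf \<Longrightarrow> r g \<le> K * (r f - r g)"
    and q: "\<And>f. q f = clip01 (s * r f - K)"
    and sum: "(\<Sum>f = 1..Nf. q f) = real Nc" and NN: "Nc \<le> Nf"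
  shows "(\<forall>f\<in>{1..Nc}. q f = 1) \<and> (\<forall>f\<in>{Nc+1..Nf}. q f = 0)"
proof -
  have q01: "0 \<le> q f" "q f \<le> 1" for f unfolding q clip01_def by auto
  have qmono: "q g \<le> q f" if "1 \<le> f" "f \<le> g" "g \<le> Nf" for f g
  proof (cases "f = g")
    case False
    then have "r g \<le> r f" using r that by simp
    then have "s * r g - K \<le> s * r f - K" using s by (simp add: mult_left_mono)
    then show ?thesis unfolding q clip01_def by (simp add: max_def min_def)
  qed simp
  have frac: "q f = s * r f - K" if "0 < q f" "q f < 1" for f
    using that unfolding q clip01_def by (auto split: if_splits simp: max_def min_def)
  have nofrac: False if fg: "1 \<le> f" "f < g" "g \<le> Nf" and
      qf: "0 < q f" "q f < 1" and qg: "0 < q g" "q g < 1" for f g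
  proof -
    have rf: "r f > 0" and rg: "r g > 0" using rpos fg by auto
    have a: "K < s * r g" using frac[OF qg] qg by simp
    have b: "s * r f < K + 1" using frac[OF qf] qf by simp
    have "K * r f < s * r g * r f" using a rf by (rule mult_strict_right_mono)
    moreover have "s * r f * r g < (K + 1) * r g" using b rg by (rule mult_strict_right_mono)
    moreover have "r g \<le> K * (r f - r g)" using sep fg by simp
    ultimately show False by (simp add: algebra_simps)
  qed
  have ones: "q f = 1" if f: "f \<in> {1..Nc}" for f
  proof (rule ccontr)
    assume "q f \<noteq> 1"
    then have qf1: "q f < 1" using q01[of f] by simp
    define T where "T = {f..Nf}"
    have sT: "(\<Sum>g\<in>T. q g) < 1"
    proof (cases "\<forall>g\<in>T. q g = 0")
      case True then show ?thesis by simp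
    next
      case False
      then obtain g0 where g0: "g0 \<in> T" "q g0 \<noteq> 0" by blast
      have qg0: "0 < q g0" "q g0 < 1"
        using g0 q01[of g0] qmono[of f g0] qf1 f NN by (auto simp: T_def)
      have z: "q g = 0" if g: "g \<in> T - {g0}" for g
      proof (rule ccontr)
        assume "q g \<noteq> 0"
        then have qg: "0 < q g" "q g < 1"
          using g q01[of g] qmono[of f g] qf1 f NN by (auto simp: T_def)
        show False
        proof (cases "g < g0")
          case True then show ?thesis using nofrac[of g g0] qg qg0 g g0 f by (auto simp: T_def)
        next
          case False then have "g0 < g" using g by auto
          then show ?thesis using nofrac[of g0 g] qg qg0 g g0 f by (auto simp: T_def)
        qed
      qed
      have "(\<Sum>g\<in>T. q g) = q g0 + (\<Sum>g\<in>T - {g0}. q g)"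
        using g0 by (simp add: T_def sum.remove)
      also have "\<dots> = q g0" using z by simp
      finally show ?thesis using qg0 by simp
    qed
    have s1: "(\<Sum>g\<in>{1..<f}. q g) \<le> real (f - 1)"
      using sum_bounded_above[of "{1..<f}" q 1] q01 by simp
    have split: "{1..Nf} = {1..<f} \<union> T" using f NN by (auto simp: T_def)
    have "(\<Sum>g = 1..Nf. q g) = (\<Sum>g\<in>{1..<f}. q g) + (\<Sum>g\<in>T. q g)"
      unfolding split by (rule sum.union_disjoint) (auto simp: T_def)
    also have "\<dots> < real (f - 1) + 1" using s1 sT by simp
    also have "\<dots> = real f" using f by simp
    also have "\<dots> \<le> real Nc" using f by simp
    finally show False using sum by simp
  qed
  have split2: "{1..Nf} = {1..Nc} \<union> {Nc+1..Nf}" using NN by auto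
  have "(\<Sum>g = 1..Nf. q g) = (\<Sum>g\<in>{1..Nc}. q g) + (\<Sum>g\<in>{Nc+1..Nf}. q g)"
    unfolding split2 by (rule sum.union_disjoint) auto
  moreover have "(\<Sum>g\<in>{1..Nc}. q g) = real Nc" using ones by simp
  ultimately have "(\<Sum>g\<in>{Nc+1..Nf}. q g) = 0" using sum by simp
  then have "\<forall>g\<in>{Nc+1..Nf}. q g = 0"
    using sum_nonneg_eq_0_iff[of "{Nc+1..Nf}" q] q01 by simp
  then show ?thesis using ones by blast
qed

lemma D_bounds:
  fixes \<alpha> x :: real
  assumes "\<alpha> > 2" "x \<ge> 1"
  shows "0 < C3 \<alpha> x + 1 \<and> C3 \<alpha> x + 1 < 1"
proof -
  define d where "d = 2 / \<alpha>"
  have d: "0 < d" "d < 1" using assms by (auto simp: d_def field_simps)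
  define G where "G = Gamma (1 - d) * Gamma (1 + d)"
  define w where "w = x / (1 + x)"
  define H where "H = HH d d w"
  define P where "P = x powr d"
  define Q where "Q = (1 + x) powr d"
  have w: "0 < w" "w < 1" using assms by (auto simp: w_def field_simps)
  have PQ: "P > 0" "Q > 0" using assms by (auto simp: P_def Q_def)
  have F: "hyp2f1 (- 2 / \<alpha>) 1 (1 - 2 / \<alpha>) (- x) = Q * H"
  proof -
    have e1: "- 2 / \<alpha> = - d" by (simp add: d_def)
    have e2: "1 - d - 1 = - d" by simp
    have e3: "- x / (- x - 1) = w" unfolding w_def using assms
      by (simp add: field_simps)
    have "hyp2f1 (- 2 / \<alpha>) 1 (1 - 2 / \<alpha>) (- x)
        = (1 - - x) powr (- (- d)) * hyp2f1_series (- d) (1 - d - 1) (1 - d) (- x / (- x - 1))"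
      unfolding hyp2f1_def e1 d_def[symmetric] using assms by simp
    also have "\<dots> = Q * H"
      unfolding e2 e3 hyp_series_eq[OF d] H_def HH_def Q_def by simp
    finally show ?thesis .
  qed
  have C: "C3 \<alpha> x + 1 = Q * H - G * P"
    unfolding C3_def C2_def F G_def P_def d_def by simp
  have wp: "w powr (-d) = Q / P"
  proof -
    have "w powr d = P / Q" unfolding w_def P_def Q_def using assms by (simp add: powr_divide)
    then show ?thesis using PQ by (simp add: powr_minus_divide)
  qed
  have omw: "(1 - w) powr d = 1 / Q"
  proof -
    have "1 - w = 1 / (1 + x)" unfolding w_def using assms by (simp add: field_simps)
    then show ?thesis unfolding Q_def using assms by (simp add: powr_divide)
  qed
  have g1: "G < H * (Q / P)" using phi_gt[OF d w] unfolding G_def H_def wp .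
  have g2: "(H - 1 / Q) * (Q / P) < G" using chi_lt[OF d w] unfolding chi_def G_def H_def wp omw .
  from g1 have "G * P < H * Q" using PQ by (simp add: field_simps)
  moreover have "H * Q - 1 < G * P"
  proof -
    have "(H - 1 / Q) * (Q / P) = (H * Q - 1) / P" using PQ by (simp add: field_simps)
    then have "(H * Q - 1) / P < G" using g2 by (simp only:)
    then show ?thesis using PQ by (simp add: divide_less_eq)
  qed
  ultimately show ?thesis unfolding C by (simp add: algebra_simps)
qed

lemma C1_nonneg:
  fixes \<alpha> x lam12 P12 B12 :: real and M1 :: nat
  assumes "\<alpha> > 2" "M1 \<ge> 1" "lam12 > 0" "P12 > 0" "B12 > 0" "x \<ge> real M1 * B12"
  shows "0 \<le> C1 \<alpha> M1 lam12 P12 B12 x"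
proof -
  define d where "d = 2 / \<alpha>"
  have d: "0 < d" "d < 1" using assms by (auto simp: d_def field_simps)
  define z where "z = - x / (real M1 * B12)"
  have MB: "real M1 * B12 > 0" using assms by simp
  have z: "z \<le> -1" unfolding z_def using assms MB by (simp add: field_simps)
  define w where "w = z / (z - 1)"
  have w: "0 < w" "w < 1" using z by (auto simp: w_def field_simps)
  define e where "e = real M1 + d - 1"
  have e: "0 \<le> e" using assms d by (simp add: e_def)
  have e1: "- 2 / \<alpha> = - d" by (simp add: d_def)
  have e2: "1 - d - real M1 = - e" by (simp add: e_def)
  have "hyp2f1 (- 2 / \<alpha>) (real M1) (1 - 2 / \<alpha>) z
      = (1 - z) powr (- (- d)) * hyp2f1_series (- d) (1 - d - real M1) (1 - d) w"
    unfolding hyp2f1_def e1 d_def[symmetric] w_def using z by simp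
  also have "\<dots> = (1 - z) powr d * HH d e w"
    unfolding e2 hyp_series_eq[OF d] HH_def by simp
  finally have h: "hyp2f1 (- 2 / \<alpha>) (real M1) (1 - 2 / \<alpha>) z = (1 - z) powr d * HH d e w" .
  have "1 \<le> HH d e w" by (rule HH_ge1[OF d e w])
  then have "0 \<le> hyp2f1 (- 2 / \<alpha>) (real M1) (1 - 2 / \<alpha>) z" unfolding h by simp
  then show ?thesis unfolding C1_def z_def[symmetric] using assms by simp
qed

lemma KL:
  fixes \<alpha> lam12 P12 B12 c :: real and M1 :: nat
  assumes "\<alpha> > 2" "M1 \<ge> 1" "lam12 > 0" "P12 > 0" "B12 > 0"
  shows "\<forall>\<^sub>F x in at_top. 0 < x \<and> 0 < C1 \<alpha> M1 lam12 P12 B12 x + C2 \<alpha> x \<and> 0 < C3 \<alpha> x + 1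
      \<and> c \<le> (C1 \<alpha> M1 lam12 P12 B12 x + C2 \<alpha> x) / (C3 \<alpha> x + 1)"
proof -
  define d where "d = 2 / \<alpha>"
  have d: "0 < d" "d < 1" using assms by (auto simp: d_def field_simps)
  define G where "G = Gamma (1 - d) * Gamma (1 + d)"
  have G: "G > 0" using d by (simp add: G_def)
  define X where "X = max (max 1 (real M1 * B12)) ((\<bar>c\<bar> / G + 1) powr (1 / d))"
  show ?thesis
  proof (rule eventually_mono[OF eventually_ge_at_top[of X]])
    fix x assume x: "X \<le> x"
    have x1: "1 \<le> x" "real M1 * B12 \<le> x" using x by (auto simp: X_def)
    have x2: "(\<bar>c\<bar> / G + 1) powr (1 / d) \<le> x" using x by (auto simp: X_def)
    have "(\<bar>c\<bar> / G + 1) = ((\<bar>c\<bar> / G + 1) powr (1 / d)) powr d"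
      using d G by (simp add: powr_powr)
    also have "\<dots> \<le> x powr d" using x2 d by (intro powr_mono2) auto
    finally have xp: "\<bar>c\<bar> / G + 1 \<le> x powr d" .
    then have "\<bar>c\<bar> + G \<le> G * x powr d" using G by (simp add: field_simps)
    moreover have C2: "C2 \<alpha> x = G * x powr d" unfolding C2_def G_def d_def by simp
    moreover have "0 \<le> C1 \<alpha> M1 lam12 P12 B12 x" by (rule C1_nonneg) (use assms x1 in auto)
    ultimately have A: "\<bar>c\<bar> + G \<le> C1 \<alpha> M1 lam12 P12 B12 x + C2 \<alpha> x" by simp
    have D: "0 < C3 \<alpha> x + 1" "C3 \<alpha> x + 1 < 1" using D_bounds[OF assms(1) x1(1)] by auto
    have Apos: "0 < C1 \<alpha> M1 lam12 P12 B12 x + C2 \<alpha> x" using A G by linarith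
    have "C1 \<alpha> M1 lam12 P12 B12 x + C2 \<alpha> x \<le> (C1 \<alpha> M1 lam12 P12 B12 x + C2 \<alpha> x) / (C3 \<alpha> x + 1)"
      using D Apos by (simp add: le_divide_eq)
    then have "c \<le> (C1 \<alpha> M1 lam12 P12 B12 x + C2 \<alpha> x) / (C3 \<alpha> x + 1)" using A G by linarith
    then show "0 < x \<and> 0 < C1 \<alpha> M1 lam12 P12 B12 x + C2 \<alpha> x \<and> 0 < C3 \<alpha> x + 1
      \<and> c \<le> (C1 \<alpha> M1 lam12 P12 B12 x + C2 \<alpha> x) / (C3 \<alpha> x + 1)"
      using Apos D x1 by simp
  qed
qed

lemma zipf_pos:
  assumes "1 \<le> f" "1 \<le> Nf"
  shows "0 < zipf Nf \<delta> f"
proof -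
  have "0 < (\<Sum>n = 1..Nf. real n powr (- \<delta>))"
    by (rule sum_pos) (use assms in auto)
  then show ?thesis unfolding zipf_def using assms by simp
qed

lemma zipf_less:
  assumes "\<delta> > 0" "1 \<le> f" "f < g" "1 \<le> Nf"
  shows "zipf Nf \<delta> g < zipf Nf \<delta> f"
proof -
  have S: "0 < (\<Sum>n = 1..Nf. real n powr (- \<delta>))"
    by (rule sum_pos) (use assms in auto)
  have "real g powr (- \<delta>) < real f powr (- \<delta>)"
    by (rule powr_less_mono2_neg) (use assms in auto)
  then show ?thesis unfolding zipf_def using S by (simp add: divide_strict_right_mono)
qed

lemma main_ev:
  fixes Nc Nf M1 :: nat
    and \<delta> \<alpha> lam12 P12 B12 :: real
    and \<nu> :: "real \<Rightarrow> real"
  assumes "1 \<le> Nc" and "Nc \<le> Nf"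
    and "\<delta> > 0" and "\<alpha> > 2" and "M1 \<ge> 1"
    and "lam12 > 0" and "P12 > 0" and "B12 > 0"
    and nu: "\<And>x. x > 0 \<Longrightarrow> \<nu> x > 0 \<and>
        (\<Sum>f = 1..Nf. qlow Nf \<delta> \<alpha> M1 lam12 P12 B12 x (\<nu> x) f) = real Nc"
  shows "\<forall>\<^sub>F x in at_top. (\<forall>f\<in>{1..Nc}. qlow Nf \<delta> \<alpha> M1 lam12 P12 B12 x (\<nu> x) f = 1)
     \<and> (\<forall>f\<in>{Nc+1..Nf}. qlow Nf \<delta> \<alpha> M1 lam12 P12 B12 x (\<nu> x) f = 0)"
proof -
  define r where "r f = sqrt (zipf Nf \<delta> f)" for f
  define A where "A x = C1 \<alpha> M1 lam12 P12 B12 x + C2 \<alpha> x" for x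
  define D where "D x = C3 \<alpha> x + 1" for x
  have Nf: "1 \<le> Nf" using assms by simp
  have rpos: "r f > 0" if "1 \<le> f" for f unfolding r_def using zipf_pos[OF that Nf] by simp
  have rless: "r g < r f" if "1 \<le> f" "f < g" for f g
    unfolding r_def using zipf_less[OF assms(3) that Nf] by simp
  define PR where "PR = {(f, g). 1 \<le> f \<and> f < g \<and> g \<le> Nf}"
  have finPR: "finite PR"
    by (rule finite_subset[of _ "{1..Nf} \<times> {1..Nf}"]) (auto simp: PR_def)
  have ev0: "\<forall>\<^sub>F x in at_top. 0 < x \<and> 0 < A x \<and> 0 < D x \<and> 0 \<le> A x / D x"
    unfolding A_def D_def by (rule KL) (use assms in auto)
  have evP: "\<forall>\<^sub>F x in at_top. \<forall>p\<in>PR. r (snd p) / (r (fst p) - r (snd p)) \<le> A x / D x"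
  proof (rule eventually_ball_finite[OF finPR], rule ballI)
    fix p assume "p \<in> PR"
    show "\<forall>\<^sub>F x in at_top. r (snd p) / (r (fst p) - r (snd p)) \<le> A x / D x"
      using KL[OF assms(4,5,6,7,8), of "r (snd p) / (r (fst p) - r (snd p))"]
      unfolding A_def D_def by (auto elim: eventually_mono)
  qed
  show ?thesis
  proof (rule eventually_mono[OF eventually_conj[OF ev0 evP]])
    fix x assume H: "(0 < x \<and> 0 < A x \<and> 0 < D x \<and> 0 \<le> A x / D x) \<and>
       (\<forall>p\<in>PR. r (snd p) / (r (fst p) - r (snd p)) \<le> A x / D x)"
    define q where "q f = qlow Nf \<delta> \<alpha> M1 lam12 P12 B12 x (\<nu> x) f" for f
    define s where "s = sqrt (A x) / (sqrt (\<nu> x) * D x)"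
    have nux: "\<nu> x > 0" and sumq: "(\<Sum>f = 1..Nf. q f) = real Nc"
      using nu[of x] H by (auto simp: q_def)
    have "(\<forall>f\<in>{1..Nc}. q f = 1) \<and> (\<forall>f\<in>{Nc+1..Nf}. q f = 0)"
    proof (rule comb[where s=s and r=r and K="A x / D x"])
      show "s > 0" unfolding s_def using H nux by simp
      show "r g \<le> r f" if "1 \<le> f" "f < g" "g \<le> Nf" for f g using rless[OF that(1,2)] by simp
      show "r f > 0" if "1 \<le> f" "f \<le> Nf" for f using rpos that by simp
      show "r g \<le> A x / D x * (r f - r g)" if fg: "1 \<le> f" "f < g" "g \<le> Nf" for f g
      proof -
        have "(f, g) \<in> PR" using fg by (simp add: PR_def)
        then have "r g / (r f - r g) \<le> A x / D x" using H by fastforce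
        moreover have "r f - r g > 0" using rless[OF fg(1,2)] by simp
        ultimately show ?thesis by (simp add: pos_divide_le_eq mult.commute)
      qed
      show "q f = clip01 (s * r f - A x / D x)" for f
        unfolding q_def qlow_def Let_def s_def r_def A_def D_def by simp
      show "(\<Sum>f = 1..Nf. q f) = real Nc" by (rule sumq)
      show "Nc \<le> Nf" by (rule assms(2))
    qed
    then show "(\<forall>f\<in>{1..Nc}. qlow Nf \<delta> \<alpha> M1 lam12 P12 B12 x (\<nu> x) f = 1)
     \<and> (\<forall>f\<in>{Nc+1..Nf}. qlow Nf \<delta> \<alpha> M1 lam12 P12 B12 x (\<nu> x) f = 0)"
      by (simp add: q_def)
  qed
qed

lemma gbar_ge: "R0 / W * (1 + 1.28 * \<rho> * Po) * ln 2 \<le> gbar W Po R0 \<rho>"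
proof -
  define y where "y = R0 / W * (1 + 1.28 * \<rho> * Po)"
  have "gbar W Po R0 \<rho> = exp (y * ln 2) - 1" unfolding gbar_def powr_def y_def by simp
  moreover have "1 + y * ln 2 \<le> exp (y * ln 2)" by (rule exp_ge_add_one_self)
  ultimately show ?thesis unfolding y_def[symmetric] by linarith
qed

lemma lin_at_top: "(c::real) > 0 \<Longrightarrow> filterlim (\<lambda>t. c * t) at_top at_top"
  by (rule filterlim_tendsto_pos_mult_at_top[OF tendsto_const _ filterlim_ident])

lemma gbar_R0:
  assumes "W > 0" "Po > 0" "\<rho> > 0"
  shows "filterlim (\<lambda>R0. gbar W Po R0 \<rho>) at_top at_top"
proof (rule filterlim_at_top_mono[OF lin_at_top])
  show "0 < (1 + 1.28 * \<rho> * Po) / W * ln 2" using assms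
    by (auto intro!: mult_pos_pos divide_pos_pos add_pos_pos)
  show "\<forall>\<^sub>F x in at_top. (1 + 1.28 * \<rho> * Po) / W * ln 2 * x \<le> gbar W Po x \<rho>"
  proof (rule always_eventually, rule allI)
    fix x
    have "(1 + 1.28 * \<rho> * Po) / W * ln 2 * x = x / W * (1 + 1.28 * \<rho> * Po) * ln 2"
      by (simp add: field_simps)
    also have "\<dots> \<le> gbar W Po x \<rho>" by (rule gbar_ge)
    finally show "(1 + 1.28 * \<rho> * Po) / W * ln 2 * x \<le> gbar W Po x \<rho>" .
  qed
qed

lemma gbar_rho:
  assumes "W > 0" "Po > 0" "R0 > 0"
  shows "filterlim (\<lambda>\<rho>. gbar W Po R0 \<rho>) at_top at_top"
proof (rule filterlim_at_top_mono[OF lin_at_top])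
  show "0 < R0 / W * 1.28 * Po * ln 2" using assms by simp
  show "\<forall>\<^sub>F x in at_top. R0 / W * 1.28 * Po * ln 2 * x \<le> gbar W Po R0 x"
  proof (rule always_eventually, rule allI)
    fix x
    have "R0 / W * 1.28 * Po * ln 2 * x \<le> R0 / W * (1 + 1.28 * x * Po) * ln 2"
      using assms by (simp add: algebra_simps)
    also have "\<dots> \<le> gbar W Po R0 x" by (rule gbar_ge)
    finally show "R0 / W * 1.28 * Po * ln 2 * x \<le> gbar W Po R0 x" .
  qed
qed



theorem corollary2:
  fixes Nc Nf M1 :: nat
    and \<delta> \<alpha> lam12 P12 B12 W Po :: real
    and \<nu> :: "real \<Rightarrow> real"
  assumes "1 \<le> Nc" and "Nc \<le> Nf"
    and "\<delta> > 0" and "\<alpha> > 2" and "M1 \<ge> 1"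
    and "lam12 > 0" and "P12 > 0" and "B12 > 0"
    and "W > 0" and "Po > 0"
    and nu: "\<And>x. x > 0 \<Longrightarrow> \<nu> x > 0 \<and>
        (\<Sum>f = 1..Nf. qlow Nf \<delta> \<alpha> M1 lam12 P12 B12 x (\<nu> x) f) = real Nc"
  shows
    "(\<forall>\<rho> > 0. (\<forall>f \<in> {1..Nc}.
         ((\<lambda>R0. qlow Nf \<delta> \<alpha> M1 lam12 P12 B12 (gbar W Po R0 \<rho>) (\<nu> (gbar W Po R0 \<rho>)) f)
            \<longlongrightarrow> 1) at_top) \<and>
       (\<forall>f \<in> {Nc+1..Nf}.
         ((\<lambda>R0. qlow Nf \<delta> \<alpha> M1 lam12 P12 B12 (gbar W Po R0 \<rho>) (\<nu> (gbar W Po R0 \<rho>)) f)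
            \<longlongrightarrow> 0) at_top)) \<and>
     (\<forall>R0 > 0. (\<forall>f \<in> {1..Nc}.
         ((\<lambda>\<rho>. qlow Nf \<delta> \<alpha> M1 lam12 P12 B12 (gbar W Po R0 \<rho>) (\<nu> (gbar W Po R0 \<rho>)) f)
            \<longlongrightarrow> 1) at_top) \<and>
       (\<forall>f \<in> {Nc+1..Nf}.
         ((\<lambda>\<rho>. qlow Nf \<delta> \<alpha> M1 lam12 P12 B12 (gbar W Po R0 \<rho>) (\<nu> (gbar W Po R0 \<rho>)) f)
            \<longlongrightarrow> 0) at_top))"
  proof -
  let ?Q = "\<lambda>x f. qlow Nf \<delta> \<alpha> M1 lam12 P12 B12 x (\<nu> x) f"
  have E: "\<forall>\<^sub>F x in at_top. (\<forall>f\<in>{1..Nc}. ?Q x f = 1) \<and> (\<forall>f\<in>{Nc+1..Nf}. ?Q x f = 0)"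
    by (rule main_ev) (use assms in auto)
  have P1: "(\<forall>f \<in> {1..Nc}. ((\<lambda>t. ?Q (g t) f) \<longlongrightarrow> 1) at_top) \<and>
            (\<forall>f \<in> {Nc+1..Nf}. ((\<lambda>t. ?Q (g t) f) \<longlongrightarrow> 0) at_top)"
    if g: "filterlim g at_top at_top" for g :: "real \<Rightarrow> real"
  proof -
    have ev: "\<forall>\<^sub>F t in at_top. (\<forall>f\<in>{1..Nc}. ?Q (g t) f = 1) \<and> (\<forall>f\<in>{Nc+1..Nf}. ?Q (g t) f = 0)"
      by (rule eventually_compose_filterlim[OF E g])
    show ?thesis
    proof (intro conjI ballI)
      fix f assume f: "f \<in> {1..Nc}"
      show "((\<lambda>t. ?Q (g t) f) \<longlongrightarrow> 1) at_top"
        by (rule tendsto_eventually) (rule eventually_mono[OF ev], use f in auto)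
    next
      fix f assume f: "f \<in> {Nc+1..Nf}"
      show "((\<lambda>t. ?Q (g t) f) \<longlongrightarrow> 0) at_top"
        by (rule tendsto_eventually) (rule eventually_mono[OF ev], use f in auto)
    qed
  qed
  show ?thesis
  proof (rule conjI; intro allI impI)
    fix \<rho> :: real assume "\<rho> > 0"
    show "(\<forall>f \<in> {1..Nc}. ((\<lambda>R0. ?Q (gbar W Po R0 \<rho>) f) \<longlongrightarrow> 1) at_top) \<and>
       (\<forall>f \<in> {Nc+1..Nf}. ((\<lambda>R0. ?Q (gbar W Po R0 \<rho>) f) \<longlongrightarrow> 0) at_top)"
      by (rule P1[OF gbar_R0]) (use assms \<open>\<rho> > 0\<close> in auto)
  next
    fix R0 :: real assume "R0 > 0"
    show "(\<forall>f \<in> {1..Nc}. ((\<lambda>\<rho>. ?Q (gbar W Po R0 \<rho>) f) \<longlongrightarrow> 1) at_top) \<and>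
       (\<forall>f \<in> {Nc+1..Nf}. ((\<lambda>\<rho>. ?Q (gbar W Po R0 \<rho>) f) \<longlongrightarrow> 0) at_top)"
      by (rule P1[OF gbar_rho]) (use assms \<open>R0 > 0\<close> in auto)
  qed
qed

end
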